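(* For each integer $n\ge2$ there exists a homeomorphism $f$ of $B_n$ onto itself such that $S^{n-1}\cup\{0\}\subset\mathrm{Fix}(f)$ and, for some point $x\in B_n\setminus(S^{n-1}\cup\{0\})$, $\omega_f(x)$ is a subset of $S^{n-1}$ homeomorphic to a circle.
   Context: $B_n=\{x\in\mathbb{R}^n:\|x\|\le1\}$ (Euclidean norm), $S^{n-1}=\{x\in\mathbb{R}^n:\|x\|=1\}$ its boundary. $\mathrm{Fix}(f)$ is the set of fixed points of $f$, and $\omega_f(x)=\{y:\ \exists\, n_i\to+\infty,\ f^{n_i}(x)\to y\}$. *)

theory Defs
  imports "HOL-Analysis.Analysis"
begin

definition Fix :: "('a \<Rightarrow> 'a) \<Rightarrow> 'a set" where
  "Fix f = {x. f x = x}"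

definition omega_limit :: "('a::topological_space \<Rightarrow> 'a) \<Rightarrow> 'a \<Rightarrow> 'a set" where
  "omega_limit f x = {y. \<exists>r::nat \<Rightarrow> nat. strict_mono r \<and> ((\<lambda>i. (f ^^ r i) x) \<longlonglongrightarrow> y)}"

end

theory Submission
  imports Defs
begin

primrec tt :: "nat \<Rightarrow> real" where
  "tt 0 = 1/2"
| "tt (Suc n) = tt n - (1 - tt n) * tt n ^ 2"

definition TH :: "nat \<Rightarrow> real" where "TH n = - ln (2 * tt n)"

lemma quad_pos: "1 - t + t ^ 2 > (0::real)"
proof -
  have "1 - t + t^2 = (t - 1/2)^2 + 3/4" by (simp add: power2_eq_square algebra_simps)
  moreover have "(t - 1/2)^2 \<ge> 0" by simp
  ultimately show ?thesis by linarith
qed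

lemma quad_le1: "0 \<le> t \<Longrightarrow> t \<le> 1 \<Longrightarrow> 1 - t + t ^ 2 \<le> (1::real)"
proof -
  assume "0 \<le> t" "t \<le> 1"
  then have "t * t \<le> t * 1" by (intro mult_left_mono) auto
  then show ?thesis by (simp add: power2_eq_square)
qed

lemma tt_Suc': "tt (Suc n) = tt n * (1 - tt n + tt n ^ 2)"
  by (simp add: algebra_simps power2_eq_square)

lemma tt_bounds: "0 < tt n \<and> tt n \<le> 1/2"
proof (induction n)
  case 0 then show ?case by simp
next
  case (Suc n)
  let ?t = "tt n"
  have q1: "1 - ?t + ?t^2 \<le> 1" using Suc quad_le1[of ?t] by simp
  have pos: "tt (Suc n) > 0" unfolding tt_Suc' using Suc quad_pos[of ?t] by (intro mult_pos_pos) auto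
  have "tt (Suc n) \<le> ?t * 1" unfolding tt_Suc' using Suc q1 by (intro mult_left_mono) auto
  then show ?case using Suc pos by (simp del: tt.simps)
qed

lemma tt_dec: "tt (Suc n) \<le> tt n"
proof -
  have "tt (Suc n) \<le> tt n * 1" unfolding tt_Suc' using tt_bounds[of n] quad_le1[of "tt n"]
    by (intro mult_left_mono) auto
  then show ?thesis by simp
qed

lemma tt_lim: "tt \<longlonglongrightarrow> 0"
proof -
  have "decseq tt" using tt_dec by (simp add: decseq_SucI)
  then obtain L where L: "tt \<longlonglongrightarrow> L" "\<forall>i. L \<le> tt i"
    using decseq_convergent[of tt 0] tt_bounds by (metis less_le)
  have "(\<lambda>n. tt n - (1 - tt n) * tt n ^ 2) \<longlonglongrightarrow> L - (1 - L) * L ^ 2"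
    by (intro tendsto_intros L(1))
  then have "(\<lambda>n. tt (Suc n)) \<longlonglongrightarrow> L - (1 - L) * L ^ 2" by simp
  moreover have "(\<lambda>n. tt (Suc n)) \<longlonglongrightarrow> L" using L(1) by (rule LIMSEQ_Suc)
  ultimately have "L - (1 - L) * L ^ 2 = L" using LIMSEQ_unique by blast
  then have "(1 - L) * L^2 = 0" by simp
  moreover have "L \<le> 1/2" using L(2)[rule_format, of 0] by simp
  ultimately have "L = 0" by simp
  then show ?thesis using L(1) by simp
qed

lemma TH_Suc: "TH (Suc n) = TH n - ln (1 - tt n + tt n ^ 2)"
proof -
  have "TH (Suc n) = - ln ((2 * tt n) * (1 - tt n + tt n ^ 2))"
    unfolding TH_def by (simp only: tt_Suc' mult.assoc)
  also have "\<dots> = - (ln (2 * tt n) + ln (1 - tt n + tt n ^ 2))"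
    using quad_pos[of "tt n"] tt_bounds[of n] by (subst ln_mult) auto
  finally show ?thesis by (simp add: TH_def)
qed

lemma TH_mono: "TH n \<le> TH (Suc n)"
proof -
  have "ln (1 - tt n + tt n ^ 2) \<le> 0"
    using quad_le1[of "tt n"] quad_pos[of "tt n"] tt_bounds[of n] by simp
  then show ?thesis by (simp add: TH_Suc)
qed

lemma TH_incr_lim: "(\<lambda>n. TH (Suc n) - TH n) \<longlonglongrightarrow> 0"
proof -
  have "(\<lambda>n. - ln (1 - tt n + tt n ^ 2)) \<longlonglongrightarrow> - ln (1 - 0 + 0 ^ 2)"
    by (intro tendsto_intros tt_lim) simp
  then show ?thesis by (simp add: TH_Suc)
qed

lemma TH_unbounded: "\<exists>n. TH n \<ge> B"
proof -
  have "exp (- B) / 2 > 0" by simp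
  then obtain n where "\<bar>tt n - 0\<bar> < exp (- B) / 2" using LIMSEQ_D[OF tt_lim] by (metis order_refl real_norm_def)
  then have "2 * tt n < exp (- B)" using tt_bounds[of n] by simp
  then have "ln (2 * tt n) < ln (exp (- B))" using tt_bounds[of n] by (subst ln_less_cancel_iff) auto
  then have "ln (2 * tt n) < - B" by simp
  then show ?thesis unfolding TH_def by (intro exI[of _ n]) simp
qed

locale plane =
  fixes e1 e2 :: "'a::euclidean_space"
  assumes e11: "e1 \<bullet> e1 = 1" and e22: "e2 \<bullet> e2 = 1" and e12: "e1 \<bullet> e2 = 0"
begin

definition LL :: "complex \<Rightarrow> 'a" where "LL w = Re w *\<^sub>R e1 + Im w *\<^sub>R e2"
definition PP :: "'a \<Rightarrow> complex" where "PP x = Complex (x \<bullet> e1) (x \<bullet> e2)"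
definition rot :: "real \<Rightarrow> 'a \<Rightarrow> 'a" where "rot a x = x - LL (PP x) + LL (cis a * PP x)"

lemma e21: "e2 \<bullet> e1 = 0" using e12 by (simp add: inner_commute)

lemma PP_LL[simp]: "PP (LL w) = w"
  by (simp add: PP_def LL_def inner_add_left e11 e22 e12 e21 complex_eq_iff)

lemma LL_add: "LL (v + w) = LL v + LL w" by (simp add: LL_def algebra_simps)
lemma LL_diff: "LL (v - w) = LL v - LL w" by (simp add: LL_def algebra_simps)
lemma LL_scale: "LL (complex_of_real c * w) = c *\<^sub>R LL w" by (simp add: LL_def algebra_simps)
lemma PP_add: "PP (x + y) = PP x + PP y" by (simp add: PP_def inner_add_left complex_eq_iff)
lemma PP_diff: "PP (x - y) = PP x - PP y" by (simp add: PP_def inner_diff_left complex_eq_iff)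
lemma PP_scale: "PP (c *\<^sub>R x) = complex_of_real c * PP x" by (simp add: PP_def complex_eq_iff)

lemma inner_LL: "LL v \<bullet> LL w = Re v * Re w + Im v * Im w"
  by (simp add: LL_def inner_add_left inner_add_right e11 e22 e12 e21)

lemma norm_LL[simp]: "norm (LL w) = cmod w"
proof -
  have "norm (LL w) ^ 2 = cmod w ^ 2"
    by (simp add: power2_norm_eq_inner[of "LL w"] inner_LL cmod_power2 power2_eq_square[symmetric])
  then show ?thesis by (simp add: power2_eq_iff_nonneg)
qed

lemma orth: "(x - LL (PP x)) \<bullet> LL w = 0"
  by (simp add: LL_def PP_def inner_diff_left inner_diff_right inner_add_right inner_add_left e11 e22 e12 e21 inner_commute)

lemma norm_decomp: "norm (y + LL w) ^ 2 = norm y ^ 2 + cmod w ^ 2" if "y \<bullet> LL w = 0" for y w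
  using that by (simp add: power2_norm_eq_inner inner_add_left inner_add_right inner_commute)
    (simp add: power2_norm_eq_inner[symmetric])

lemma norm_rot[simp]: "norm (rot a x) = norm x"
proof -
  have "norm (rot a x) ^ 2 = norm (x - LL (PP x)) ^ 2 + cmod (cis a * PP x) ^ 2"
    unfolding rot_def using norm_decomp[OF orth] by simp
  also have "\<dots> = norm (x - LL (PP x) + LL (PP x)) ^ 2"
    using norm_decomp[OF orth, of x "PP x"] by (simp add: norm_mult)
  finally show ?thesis by (simp add: power2_eq_iff_nonneg)
qed

lemma PP_rot: "PP (rot a x) = cis a * PP x"
  by (simp add: rot_def PP_add PP_diff)

lemma rot_inv[simp]: "rot (-a) (rot a x) = x"
  by (simp add: rot_def[of "-a"] PP_rot mult.assoc[symmetric] cis_mult)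
    (simp add: rot_def)

lemma rot_inv'[simp]: "rot a (rot (-a) x) = x"
  using rot_inv[of "-a" x] by simp

lemma rot_0[simp]: "rot 0 x = x" by (simp add: rot_def)

lemma rot_scale: "rot a (c *\<^sub>R x) = c *\<^sub>R rot a x"
  by (simp add: rot_def PP_scale LL_scale[symmetric] algebra_simps LL_diff LL_add)

lemma rot_LL: "rot a (LL w) = LL (cis a * w)" by (simp add: rot_def)

lemma cont_LL: "continuous_on S LL"
  unfolding LL_def by (intro continuous_intros)
lemma cont_PP: "continuous_on S PP"
  unfolding PP_def by (intro continuous_intros)

definition cc :: "real \<Rightarrow> real" where "cc r = 1 + (1 - r)^2"
definition th :: "real \<Rightarrow> real" where "th r = - ln (1 - r + r^2)"
definition rho :: "real \<Rightarrow> real" where "rho r = r * cc r"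
definition F :: "'a \<Rightarrow> 'a" where "F x = cc (norm x) *\<^sub>R rot (th (norm x)) x"

lemma cc_pos: "cc r > 0" unfolding cc_def by (simp add: add_pos_nonneg)

lemma norm_F: "norm (F x) = rho (norm x)"
  using cc_pos[of "norm x"] by (simp add: F_def rho_def)

lemma rho_inj: assumes "0 \<le> a" "0 \<le> b" "rho a = rho b" shows "a = b"
proof -
  have "rho a - rho b = (a - b) * ((a-1)^2 + (b-1)^2 + a*b)"
    by (simp add: rho_def cc_def algebra_simps power2_eq_square power3_eq_cube)
  moreover have "(a-1)^2 + (b-1)^2 + a*b > 0"
  proof (cases "a = 1")
    case True then show ?thesis using assms by (cases "b = 0") (auto simp: add_nonneg_pos)
  next
    case False then have "(a-1)^2 > 0" by simp
    then show ?thesis using assms by (simp add: add_pos_nonneg)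
  qed
  ultimately show ?thesis using assms by simp
qed

lemma rho_le1: assumes "0 \<le> r" "r \<le> 1" shows "rho r \<le> 1"
proof -
  have "r * (1 - r) \<le> 1" using assms mult_le_one[of r "1-r"] by simp
  then have "r * (1-r)^2 \<le> 1 - r" using assms
    by (metis mult.assoc mult_right_mono power2_eq_square diff_ge_0_iff_ge mult_1 mult.commute)
  then show ?thesis by (simp add: rho_def cc_def algebra_simps)
qed

lemma rho_0[simp]: "rho 0 = 0" by (simp add: rho_def)
lemma rho_1[simp]: "rho 1 = 1" by (simp add: rho_def cc_def)
lemma rho_nonneg: "0 \<le> r \<Longrightarrow> 0 \<le> rho r" using cc_pos[of r] by (simp add: rho_def)

lemma th_arg_pos: "1 - r + r^2 > (0::real)"
proof -
  have "1 - r + r^2 = (r - 1/2)^2 + 3/4" by (simp add: power2_eq_square algebra_simps)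
  moreover have "(r - 1/2)^2 \<ge> 0" by simp
  ultimately show ?thesis by linarith
qed

lemma cont_rot: "continuous_on S (\<lambda>x. rot (a x) (b x))" if "continuous_on S a" "continuous_on S b"
  unfolding rot_def LL_def PP_def using that by (intro continuous_intros) auto

lemma cont_F: "continuous_on S F"
proof -
  have "continuous_on S (\<lambda>x. th (norm x))" unfolding th_def
    by (intro continuous_intros) (metis th_arg_pos order_less_irrefl)
  then show ?thesis unfolding F_def cc_def
    by (intro continuous_intros cont_rot) auto
qed

lemma F_sphere: "norm x = 1 \<Longrightarrow> F x = x" by (simp add: F_def cc_def th_def)
lemma F_0: "F 0 = 0" by (simp add: F_def rot_scale[of _ 0 0, simplified])

lemma F_inj: "inj_on F (cball 0 1)"
proof
  fix x y assume "x \<in> cball 0 1" "y \<in> cball 0 1" and eq: "F x = F y"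
  have "norm x = norm y" using rho_inj[of "norm x" "norm y"] norm_F[of x] norm_F[of y] eq by simp
  then have "rot (th (norm x)) x = rot (th (norm x)) y" using eq cc_pos[of "norm x"] by (simp add: F_def)
  then have "rot (- th (norm x)) (rot (th (norm x)) x) = rot (- th (norm x)) (rot (th (norm x)) y)" by simp
  then show "x = y" by simp
qed

lemma F_image: "F ` cball 0 1 = cball 0 1"
proof
  show "F ` cball 0 1 \<subseteq> cball 0 1" using norm_F rho_le1 by auto
  show "cball 0 1 \<subseteq> F ` cball 0 1"
  proof
    fix y :: 'a assume y: "y \<in> cball 0 1"
    have "continuous_on {0..1} rho" unfolding rho_def cc_def by (intro continuous_intros)
    then obtain r where r: "0 \<le> r" "r \<le> 1" "rho r = norm y"
      using IVT'[of rho 0 "norm y" 1] y by auto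
    define x where "x = (1 / cc r) *\<^sub>R rot (- th r) y"
    have nx: "norm x = r" using r cc_pos[of r] by (simp add: x_def flip: r(3) add: rho_def)
    have "F x = cc r *\<^sub>R rot (th r) x" by (simp add: F_def nx)
    also have "\<dots> = y" using cc_pos[of r] by (simp add: x_def rot_scale)
    finally have "F x = y" .
    then show "y \<in> F ` cball 0 1" using nx r by force
  qed
qed


lemma orbit: "(F ^^ n) (LL (1/2)) = LL (complex_of_real (1 - tt n) * cis (TH n))"
proof (induction n)
  case 0 then show ?case by (simp add: TH_def)
next
  case (Suc n)
  let ?t = "tt n"
  have tb: "0 < ?t" "?t \<le> 1/2" using tt_bounds[of n] by auto
  have nrm: "norm (LL (complex_of_real (1 - ?t) * cis (TH n))) = 1 - ?t"
  proof -
    have "cmod (complex_of_real (1 - ?t)) = 1 - ?t" unfolding norm_of_real using tb by simp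
    then show ?thesis by (simp add: norm_mult del: of_real_diff)
  qed
  have th_eq: "th (1 - ?t) = - ln (1 - ?t + ?t ^ 2)"
    unfolding th_def by (simp add: power2_eq_square algebra_simps)
  have cc_eq: "cc (1 - ?t) * (1 - ?t) = 1 - tt (Suc n)"
    unfolding cc_def tt.simps by (simp add: power2_eq_square algebra_simps)
  have "(F ^^ Suc n) (LL (1/2)) = F (LL (complex_of_real (1 - ?t) * cis (TH n)))"
    using Suc by simp
  also have "\<dots> = cc (1 - ?t) *\<^sub>R LL (cis (th (1 - ?t)) * (complex_of_real (1 - ?t) * cis (TH n)))"
    unfolding F_def nrm rot_LL ..
  also have "\<dots> = LL (complex_of_real (cc (1 - ?t)) * (cis (th (1 - ?t)) * (complex_of_real (1 - ?t) * cis (TH n))))"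
    by (simp add: LL_scale)
  also have "complex_of_real (cc (1 - ?t)) * (cis (th (1 - ?t)) * (complex_of_real (1 - ?t) * cis (TH n)))
      = complex_of_real (cc (1 - ?t) * (1 - ?t)) * (cis (TH n) * cis (th (1 - ?t)))"
    by (simp add: algebra_simps)
  also have "\<dots> = complex_of_real (1 - tt (Suc n)) * cis (TH (Suc n))"
    unfolding cc_eq cis_mult th_eq TH_Suc by simp
  finally show ?case .
qed

lemma compact_C: "compact (LL ` sphere 0 1)"
  by (intro compact_continuous_image cont_LL compact_sphere)

lemma C_homeo: "(LL ` sphere 0 1) homeomorphic sphere (0::complex) 1"
proof -
  have "inj_on LL (sphere 0 1)" by (metis PP_LL inj_on_inverseI)
  then obtain g where "homeomorphism (sphere (0::complex) 1) (LL ` sphere 0 1) LL g"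
    using homeomorphism_compact[OF compact_sphere cont_LL refl] by blast
  then show ?thesis by (meson homeomorphic_def homeomorphic_sym)
qed

lemma C_sphere: "LL ` sphere 0 1 \<subseteq> sphere 0 1" by auto

end

lemma subseq_from_freq:
  fixes Z :: "nat \<Rightarrow> 'a::metric_space"
  assumes A: "\<And>e N. e > 0 \<Longrightarrow> \<exists>n>N. dist (Z n) y < e"
  shows "\<exists>r. strict_mono r \<and> (Z \<circ> r) \<longlonglongrightarrow> y"
proof -
  define s where "s i N = (SOME j. N < j \<and> dist (Z j) y < inverse (real (Suc i)))" for i N
  have s: "N < s i N \<and> dist (Z (s i N)) y < inverse (real (Suc i))" for i N
    unfolding s_def by (rule someI_ex) (use A[of "inverse (real (Suc i))" N] in auto)
  define r where "r = rec_nat (s 0 0) s"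
  have rS: "r (Suc i) = s i (r i)" for i by (simp add: r_def)
  have "strict_mono r" unfolding strict_mono_Suc_iff using s rS by auto
  moreover have "(Z \<circ> r) \<longlonglongrightarrow> y"
    unfolding lim_sequentially
  proof (intro allI impI)
    fix e :: real assume e: "e > 0"
    then obtain N where N: "inverse (real (Suc N)) < e" using reals_Archimedean by blast
    have "dist ((Z \<circ> r) n) y < e" if "n \<ge> Suc N" for n
    proof -
      obtain m where m: "n = Suc m" "m \<ge> N" using \<open>n \<ge> Suc N\<close> by (cases n) auto
      have "dist ((Z \<circ> r) n) y < inverse (real (Suc m))" using s m rS by simp
      also have "\<dots> \<le> inverse (real (Suc N))" using m by (simp add: field_simps)
      finally show ?thesis using N by simp
    qed
    then show "\<exists>no. \<forall>n\<ge>no. dist ((Z \<circ> r) n) y < e" by blast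
  qed
  ultimately show ?thesis by blast
qed

lemma freq_cis:
  assumes w: "cmod w = 1" and e: "e > 0"
  shows "\<exists>n>N. cmod (cis (TH n) - w) < e"
proof -
  define \<alpha> where "\<alpha> = Arg w"
  have "w \<noteq> 0" using w by auto
  then have w\<alpha>: "w = cis \<alpha>" using w cis_Arg[of w] by (simp add: \<alpha>_def sgn_eq)
  have "continuous (at \<alpha>) cis"
    using continuous_on_cis[OF continuous_on_id, of UNIV] by (simp add: continuous_on_eq_continuous_at)
  then obtain d where d: "d > 0" "\<And>a. dist a \<alpha> < d \<Longrightarrow> dist (cis a) (cis \<alpha>) < e"
    using e unfolding continuous_at_eps_delta by blast
  obtain M0 where M0: "\<And>n. n \<ge> M0 \<Longrightarrow> \<bar>TH (Suc n) - TH n\<bar> < d"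
    using LIMSEQ_D[OF TH_incr_lim d(1)] by (metis diff_zero real_norm_def)
  define M where "M = max M0 (Suc N)"
  define K :: int where "K = ceiling ((TH M - \<alpha>) / (2 * pi)) + 1"
  define T where "T = \<alpha> + 2 * pi * real_of_int K"
  have "(TH M - \<alpha>) / (2 * pi) < real_of_int K" unfolding K_def by linarith
  then have TM: "TH M < T" unfolding T_def by (simp add: field_simps pi_gt_zero)
  have incTH: "incseq TH" using TH_mono by (simp add: incseq_SucI)
  obtain n' where n': "TH n' \<ge> T" using TH_unbounded by blast
  define P where "P n = (M \<le> n \<and> T \<le> TH n)" for n
  have "P (max n' M)" unfolding P_def using n' incTH by (meson incseqD max.cobounded1 max.cobounded2 order_trans)
  define m0 where "m0 = (LEAST n. P n)"
  have Pm0: "P m0" unfolding m0_def by (rule LeastI) fact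
  have "m0 \<noteq> M" using Pm0 TM unfolding P_def by auto
  then obtain m where m: "m0 = Suc m" "M \<le> m" using Pm0 unfolding P_def
    by (metis le_neq_implies_less less_eq_Suc_le not0_implies_Suc not_less0 Suc_le_mono)
  have "\<not> P m" using m(1) unfolding m0_def by (metis Suc_n_not_le_n Least_le)
  then have Tm: "TH m < T" using m unfolding P_def by auto
  have "\<bar>TH (Suc m) - TH m\<bar> < d" using M0 m M_def by auto
  then have "\<bar>TH m0 - T\<bar> < d" using Pm0 Tm m unfolding P_def by auto
  then have "dist (TH m0 - 2 * pi * real_of_int K) \<alpha> < d" unfolding T_def dist_real_def by argo
  then have "dist (cis (TH m0 - 2 * pi * real_of_int K)) (cis \<alpha>) < e" by (rule d(2))
  moreover have "cis (TH m0 - 2 * pi * real_of_int K) = cis (TH m0)"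
    by (simp flip: cis_divide)
  ultimately have "cmod (cis (TH m0) - w) < e" using w\<alpha> by (simp add: dist_norm)
  moreover have "m0 > N" using m M_def by auto
  ultimately show ?thesis by blast
qed

context plane begin

lemma omega: "omega_limit F (LL (1/2)) = LL ` sphere 0 1"
proof -
  define X where "X n = LL (complex_of_real (1 - tt n) * cis (TH n))" for n
  define Z where "Z n = LL (cis (TH n))" for n
  have XZ: "norm (X n - Z n) = tt n" for n
  proof -
    have "X n - Z n = LL (complex_of_real (- tt n) * cis (TH n))"
      unfolding X_def Z_def LL_diff[symmetric] by (simp add: algebra_simps)
    then show ?thesis using tt_bounds[of n] by (simp add: norm_mult)
  qed
  have XZ0: "(\<lambda>n. X n - Z n) \<longlonglongrightarrow> 0"
  proof -
    have "(\<lambda>n. norm (X n - Z n)) \<longlonglongrightarrow> 0" using tt_lim by (simp add: XZ)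
    then show ?thesis by (rule tendsto_norm_zero_cancel)
  qed
  have om: "omega_limit F (LL (1/2)) = {y. \<exists>r. strict_mono r \<and> (X \<circ> r) \<longlonglongrightarrow> y}"
    unfolding omega_limit_def X_def orbit by (simp add: comp_def)
  have ZC: "Z n \<in> LL ` sphere 0 1" for n unfolding Z_def by auto
  show ?thesis unfolding om
  proof (intro equalityI subsetI)
    fix y assume "y \<in> {y. \<exists>r. strict_mono r \<and> (X \<circ> r) \<longlonglongrightarrow> y}"
    then obtain r where r: "strict_mono r" "(X \<circ> r) \<longlonglongrightarrow> y" by blast
    have "(\<lambda>i. X (r i) - (X (r i) - Z (r i))) \<longlonglongrightarrow> y - 0"
      using r(2) LIMSEQ_subseq_LIMSEQ[OF XZ0 r(1)] by (intro tendsto_intros) (auto simp: comp_def)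
    then have "(\<lambda>i. Z (r i)) \<longlonglongrightarrow> y" by simp
    then show "y \<in> LL ` sphere 0 1"
      using closed_sequentially[OF compact_imp_closed[OF compact_C], of "\<lambda>i. Z (r i)" y] ZC by blast
  next
    fix y assume "y \<in> LL ` sphere 0 1"
    then obtain w where w: "cmod w = 1" "y = LL w" by auto
    have "\<exists>n>N. dist (Z n) y < e" if "e > 0" for e N
    proof -
      obtain n where "n > N" "cmod (cis (TH n) - w) < e" using freq_cis[OF w(1) \<open>e > 0\<close>] by blast
      then show ?thesis unfolding Z_def w(2) dist_norm LL_diff[symmetric] by auto
    qed
    then obtain r where r: "strict_mono r" "(Z \<circ> r) \<longlonglongrightarrow> y" using subseq_from_freq by blast
    have "(\<lambda>i. Z (r i) + (X (r i) - Z (r i))) \<longlonglongrightarrow> y + 0"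
      using r(2) LIMSEQ_subseq_LIMSEQ[OF XZ0 r(1)] by (intro tendsto_intros) (auto simp: comp_def)
    then have "(X \<circ> r) \<longlonglongrightarrow> y" by (simp add: comp_def)
    then show "y \<in> {y. \<exists>r. strict_mono r \<and> (X \<circ> r) \<longlonglongrightarrow> y}" using r(1) by blast
  qed
qed

end

theorem proposition4p1:
  assumes "DIM('a::euclidean_space) \<ge> 2"
  shows "\<exists>(f::'a \<Rightarrow> 'a) g.
           homeomorphism (cball 0 1) (cball 0 1) f g \<and>
           sphere 0 1 \<union> {0} \<subseteq> Fix f \<and>
           (\<exists>x \<in> cball 0 1 - (sphere 0 1 \<union> {0}).
              omega_limit f x \<subseteq> sphere 0 1 \<and>
              omega_limit f x homeomorphic sphere (0::complex) 1)"
proof -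
  obtain b1 :: 'a where b1: "b1 \<in> Basis" using nonempty_Basis by blast
  have "card (Basis - {b1} :: 'a set) \<ge> 1" using assms b1 by simp
  then obtain b2 :: 'a where b2: "b2 \<in> Basis" "b2 \<noteq> b1"
    by (metis One_nat_def card.empty Diff_iff ex_in_conv insert_iff not_one_le_zero)
  interpret plane b1 b2 using b1 b2 by unfold_locales (auto simp: inner_Basis)
  obtain g where g: "homeomorphism (cball 0 1) (cball 0 1) F g"
    using homeomorphism_compact[OF compact_cball cont_F F_image F_inj] by blast
  have fx: "sphere 0 1 \<union> {0} \<subseteq> Fix F" using F_sphere F_0 by (auto simp: Fix_def)
  have n0: "norm (LL (1/2)) = 1/2" by simp
  then have x0: "LL (1/2) \<in> cball 0 1 - (sphere 0 1 \<union> {0})" by (auto simp del: norm_LL)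
  show ?thesis
    using g fx x0 omega C_sphere C_homeo by metis
qed

end
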